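(* Let $n\ge 2$ and let $A$ be an associative (not necessarily unital) algebra over a field satisfying the identity $x_1x_2\cdots x_{n-1}x_n=x_nx_2\cdots x_{n-1}x_1$ (i.e. the identity associated with the transposition $(1\,n)\in S_n$). Then $A$ is eventually commutative of degree $n+1$.
   Context: An algebra $A$ satisfies an identity $x_1\cdots x_m=x_{\tau(1)}\cdots x_{\tau(m)}$ (with $\tau\in S_m$) if $a_1\cdots a_m=a_{\tau(1)}\cdots a_{\tau(m)}$ for all $a_1,\dots,a_m\in A$. $A$ is eventually commutative of degree $k$ if it satisfies $x_1\cdots x_k=x_{\tau(1)}\cdots x_{\tau(k)}$ for every $\tau\in S_k$. *)

theory Defs
  imports Main "HOL-Combinatorics.Permutations" "HOL-Combinatorics.Transposition"
begin

text \<open>Associative, not necessarily unital, algebra over a field 'k: the carrier type 'a is a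
(non-unital) ring (type class ring has no 1), and s is a scalar multiplication making 'a a
'k-vector space such that multiplication is bilinear.\<close>
definition assoc_algebra :: "('k::field \<Rightarrow> 'a::ring \<Rightarrow> 'a) \<Rightarrow> bool" where
  "assoc_algebra s \<longleftrightarrow>
     (\<forall>a b x. s a (s b x) = s (a * b) x) \<and>
     (\<forall>x. s 1 x = x) \<and>
     (\<forall>a x y. s a (x + y) = s a x + s a y) \<and>
     (\<forall>a b x. s (a + b) x = s a x + s b x) \<and>
     (\<forall>a x y. s a (x * y) = s a x * y \<and> s a (x * y) = x * s a y)"

text \<open>Product x1 x2 ... xm of a nonempty word (no unit needed).\<close>
definition wprod :: "'a::semigroup_mult list \<Rightarrow> 'a" where
  "wprod xs = foldl (*) (hd xs) (tl xs)"

text \<open>A satisfies x_0 ... x_(m-1) = x_tau(0) ... x_tau(m-1) (0-indexed letters).\<close>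
definition satisfies_identity :: "'a::semigroup_mult itself \<Rightarrow> nat \<Rightarrow> (nat \<Rightarrow> nat) \<Rightarrow> bool" where
  "satisfies_identity _ m \<tau> \<longleftrightarrow>
     (\<forall>a :: nat \<Rightarrow> 'a. wprod (map a [0..<m]) = wprod (map (a \<circ> \<tau>) [0..<m]))"

definition eventually_commutative :: "'a::semigroup_mult itself \<Rightarrow> nat \<Rightarrow> bool" where
  "eventually_commutative T k \<longleftrightarrow> (\<forall>\<tau>. \<tau> permutes {..<k} \<longrightarrow> satisfies_identity T k \<tau>)"

end

theory Submission
  imports Defs "HOL-Library.Multiset"
begin

lemma foldl_mult_assoc: "foldl (*) ((x::'a::semigroup_mult) * y) xs = x * foldl (*) y xs"
  by (induction xs arbitrary: y) (simp_all add: mult.assoc)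

lemma wprod_Cons: "xs \<noteq> [] \<Longrightarrow> wprod ((x::'a::semigroup_mult) # xs) = x * wprod xs"
  by (cases xs) (simp_all add: wprod_def foldl_mult_assoc)

lemma wprod_single[simp]: "wprod [x] = x"
  by (simp add: wprod_def)

lemma wprod_snoc: "xs \<noteq> [] \<Longrightarrow> wprod (xs @ [y]) = wprod xs * (y::'a::semigroup_mult)"
  by (cases xs) (simp_all add: wprod_def)

lemma wprod_pair: "wprod ((x::'a::semigroup_mult) # y # r) = wprod ((x*y) # r)"
  by (simp add: wprod_def)

lemma wprod_snoc_pair: "xs \<noteq> [] \<Longrightarrow> wprod (xs @ [(a::'a::semigroup_mult) * b]) = wprod (xs @ [a,b])"
proof -
  assume "xs \<noteq> []"
  then show ?thesis
    using wprod_snoc[of xs] wprod_snoc[of "xs @ [a]" b]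
    by (simp add: mult.assoc)
qed

lemma K_of_ident:
  assumes h: "satisfies_identity TYPE('a::semigroup_mult) n (transpose 0 (n - 1))"
    and n2: "n \<ge> 2" and len: "length M = n - 2"
  shows "wprod ((x::'a) # M @ [y]) = wprod (y # M @ [x])"
proof -
  define L where "L = x # M @ [y]"
  define a where "a = (\<lambda>i. L ! i)"
  have lenL: "length L = n" using len n2 by (simp add: L_def)
  have 1: "map a [0..<n] = L" unfolding a_def using lenL by (metis map_nth)
  have 2: "map (a \<circ> transpose 0 (n - 1)) [0..<n] = y # M @ [x]"
  proof (rule nth_equalityI)
    show "length (map (a \<circ> transpose 0 (n - 1)) [0..<n]) = length (y # M @ [x])"
      using len n2 by simp
  next
    fix i assume "i < length (map (a \<circ> transpose 0 (n - 1)) [0..<n])"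
    then have i: "i < n" by simp
    show "map (a \<circ> transpose 0 (n - 1)) [0..<n] ! i = (y # M @ [x]) ! i"
    proof -
      consider "i = 0" | "i = n - 1" | "0 < i" "i < n - 1" using i by linarith
      then show ?thesis
      proof cases
        case 1 then show ?thesis using i len n2
          by (auto simp add: a_def L_def nth_append)
      next
        case 2 then show ?thesis using i len n2
          by (auto simp add: a_def L_def nth_append)
      next
        case 3 then show ?thesis using i len n2
          by (auto simp add: a_def L_def nth_append nth_Cons' transpose_def)
      qed
    qed
  qed
  from h have "wprod (map a [0..<n]) = wprod (map (a \<circ> transpose 0 (n - 1)) [0..<n])"
    unfolding satisfies_identity_def by blast
  then show ?thesis using 1 2 by (simp add: L_def)
qed


definition KK :: "nat \<Rightarrow> 'a::semigroup_mult itself \<Rightarrow> bool" where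
  "KK n _ \<longleftrightarrow> (\<forall>(x::'a) M y. length M = n - 2 \<longrightarrow> wprod (x # M @ [y]) = wprod (y # M @ [x]))"

context
  fixes n :: nat
  assumes n2: "n \<ge> 2"
begin


lemma R1a:
  assumes K:  "KK n TYPE('a::semigroup_mult)" and len: "length M = n - 2"
  shows "wprod ((x::'a) # M @ [y, w]) = wprod (y # M @ [x, w])"
proof -
  have "wprod (x # M @ [y, w]) = wprod ((x # M @ [y]) @ [w])" by simp
  also have "\<dots> = wprod (x # M @ [y]) * w" by (rule wprod_snoc) simp
  also have "\<dots> = wprod (y # M @ [x]) * w" using K len unfolding KK_def by metis
  also have "\<dots> = wprod ((y # M @ [x]) @ [w])" by (rule wprod_snoc[symmetric]) simp
  finally show ?thesis by simp
qed

lemma R1b: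
  assumes K:  "KK n TYPE('a::semigroup_mult)" and len: "length M = n - 2"
  shows "wprod ((w::'a) # x # M @ [y]) = wprod (w # y # M @ [x])"
proof -
  have "wprod (w # x # M @ [y]) = w * wprod (x # M @ [y])" by (rule wprod_Cons) simp
  also have "\<dots> = w * wprod (y # M @ [x])" using K len unfolding KK_def by metis
  also have "\<dots> = wprod (w # y # M @ [x])" by (rule wprod_Cons[symmetric]) simp
  finally show ?thesis .
qed

lemma R2:
  assumes K:  "KK n TYPE('a::semigroup_mult)" and len: "length M = n - 1"
  shows "wprod ((x::'a) # M @ [y]) = wprod (y # M @ [x])"
proof (cases "n = 2")
  case True
  then obtain m where M: "M = [m]" using len by (cases M) auto
  have comm: "\<And>u v::'a. u * v = v * u"
  proof -
    fix u v :: 'a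
    have "wprod (u # [] @ [v]) = wprod (v # [] @ [u])" using K True unfolding KK_def by simp
    then show "u * v = v * u" by (simp add: wprod_def)
  qed
  have "y * (m * x) = x * (m * y)" by (metis comm mult.assoc)
  then show ?thesis unfolding M wprod_def by (simp add: mult.assoc)
next
  case False
  then have n3: "n \<ge> 3" using n2 by simp
  then obtain m1 m2 M' where M: "M = m1 # m2 # M'" and lenM': "length M' = n - 3"
    using len by (cases M; cases "tl M") auto
  have eq: "\<And>u v. wprod ((u::'a) # M @ [v]) = wprod (u # ((m1*m2) # M') @ [v])"
  proof -
    fix u v
    have "wprod ((u::'a) # M @ [v]) = u * wprod (m1 # m2 # M' @ [v])"
      unfolding M by (simp add: wprod_Cons)
    also have "\<dots> = u * wprod ((m1*m2) # M' @ [v])" by (simp add: wprod_pair)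
    also have "\<dots> = wprod (u # ((m1*m2) # M') @ [v])" by (simp add: wprod_Cons)
    finally show "wprod ((u::'a) # M @ [v]) = wprod (u # ((m1*m2) # M') @ [v])" .
  qed
  have "length ((m1*m2) # M') = n - 2" using lenM' n3 by simp
  then show ?thesis unfolding eq using K unfolding KK_def by blast
qed

lemma rot1:
  assumes K:  "KK n TYPE('a::semigroup_mult)" and len: "length A = n - 1"
  shows "wprod ((a0::'a) # A @ [z]) = wprod (a0 # rotate1 A @ [z])"
proof -
  obtain a1 M where A: "A = a1 # M" and lenM: "length M = n - 2"
    using len n2 by (cases A) auto
  have "wprod (a0 # A @ [z]) = wprod ((a0 * a1) # M @ [z])" unfolding A by (simp add: wprod_pair)
  also have "\<dots> = wprod (z # M @ [a0 * a1])" using K lenM unfolding KK_def by blast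
  also have "\<dots> = wprod ((z # M) @ [a0, a1])" using wprod_snoc_pair[of "z # M" a0 a1] by simp
  also have "\<dots> = wprod (a1 # (M @ [a0]) @ [z])"
    using R2[OF K, of "M @ [a0]" z a1] lenM n2 by simp
  also have "\<dots> = wprod (a0 # M @ [a1, z])"
    using R1a[OF K lenM, of a1 a0 z] by simp
  finally show ?thesis unfolding A by simp
qed

lemma rotk:
  assumes K:  "KK n TYPE('a::semigroup_mult)" and len: "length A = n - 1"
  shows "wprod ((a0::'a) # A @ [z]) = wprod (a0 # rotate k A @ [z])"
proof (induction k)
  case 0 then show ?case by simp
next
  case (Suc k)
  then show ?case using rot1[OF K, of "rotate k A" a0 z] len by simp
qed

lemma swap01:
  assumes K:  "KK n TYPE('a::semigroup_mult)" and len: "length M = n - 2"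
  shows "wprod ((a0::'a) # a1 # M @ [z]) = wprod (a1 # a0 # M @ [z])"
proof -
  have "wprod (a0 # a1 # M @ [z]) = wprod (a0 # z # M @ [a1])" by (rule R1b[OF K len])
  also have "\<dots> = wprod (a1 # (z # M) @ [a0])" using R2[OF K, of "z # M" a0 a1] len n2 by simp
  also have "\<dots> = wprod (a1 # a0 # M @ [z])" using R1b[OF K len, of a1 z a0] by simp
  finally show ?thesis .
qed

lemma S0:
  assumes K:  "KK n TYPE('a::semigroup_mult)" and len: "length u + length v = n - 2"
  shows "wprod ((a0::'a) # u @ x # v @ [z]) = wprod (x # u @ a0 # v @ [z])"
proof -
  have l1: "length (u @ x # v) = n - 1" using len n2 by simp
  have "wprod (a0 # u @ x # v @ [z]) = wprod (a0 # (u @ x # v) @ [z])" by simp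
  also have "\<dots> = wprod (a0 # rotate (length u) (u @ x # v) @ [z])" by (rule rotk[OF K l1])
  also have "\<dots> = wprod (a0 # x # (v @ u) @ [z])" by (simp add: rotate_append)
  also have "\<dots> = wprod (x # a0 # (v @ u) @ [z])"
    by (rule swap01[OF K]) (use len in simp)
  also have "\<dots> = wprod (x # ((a0 # v) @ u) @ [z])" by simp
  also have "\<dots> = wprod (x # rotate (length (a0 # v)) ((a0 # v) @ u) @ [z])"
    by (rule rotk[OF K]) (use len n2 in simp)
  also have "\<dots> = wprod (x # u @ a0 # v @ [z])" by (simp only: rotate_append) simp
  finally show ?thesis .
qed

lemma adj:
  assumes K:  "KK n TYPE('a::semigroup_mult)" and len: "length p + length q = n - 1"
  shows "wprod (p @ (x::'a) # y # q) = wprod (p @ y # x # q)"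
proof (cases p)
  case Nil
  then have "q \<noteq> []" using len n2 by auto
  then obtain v z where q: "q = v @ [z]" by (metis rev_exhaust)
  show ?thesis using S0[OF K, of "[]" v x y z] len n2 unfolding Nil q by simp
next
  case (Cons a0 p')
  show ?thesis
  proof (cases "q = []")
    case True
    have lp: "length p' = n - 2" using len n2 Cons True by simp
    have "wprod (p @ x # y # q) = wprod (a0 # (p' @ [x]) @ [y])" using Cons True by simp
    also have "\<dots> = wprod (y # (p' @ [x]) @ [a0])" by (rule R2[OF K]) (use lp n2 in simp)
    also have "\<dots> = wprod (y # p' @ x # [] @ [a0])" by simp
    also have "\<dots> = wprod (x # p' @ y # [] @ [a0])" by (rule S0[OF K]) (use lp in simp)
    also have "\<dots> = wprod (x # (p' @ [y]) @ [a0])" by simp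
    also have "\<dots> = wprod (a0 # (p' @ [y]) @ [x])" by (rule R2[OF K]) (use lp n2 in simp)
    finally show ?thesis using Cons True by simp
  next
    case False
    then obtain q' z where q: "q = q' @ [z]" by (metis rev_exhaust)
    have lp: "length p' + length (y # q') = n - 2" using len n2 Cons q by simp
    have lp2: "length p' + length (x # q') = n - 2" using len n2 Cons q by simp
    have "wprod (p @ x # y # q) = wprod (a0 # p' @ x # (y # q') @ [z])" using Cons q by simp
    also have "\<dots> = wprod (x # p' @ a0 # (y # q') @ [z])" by (rule S0[OF K lp])
    also have "\<dots> = wprod (y # p' @ a0 # (x # q') @ [z])"
    proof -
      have "wprod (x # p' @ a0 # (y # q') @ [z]) = wprod (x # (p' @ [a0]) @ y # q' @ [z])" by simp
      also have "\<dots> = wprod (y # (p' @ [a0]) @ x # q' @ [z])"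
        by (rule S0[OF K]) (use lp in simp)
      finally show ?thesis by simp
    qed
    also have "\<dots> = wprod (a0 # p' @ y # (x # q') @ [z])" by (rule S0[OF K lp2, symmetric])
    finally show ?thesis using Cons q by simp
  qed
qed

lemma move_front:
  assumes K:  "KK n TYPE('a::semigroup_mult)"
  shows "length p + length u + length v = n \<Longrightarrow>
    wprod (p @ u @ (x::'a) # v) = wprod (p @ x # u @ v)"
proof (induction u arbitrary: p)
  case Nil then show ?case by simp
next
  case (Cons c u)
  have "wprod (p @ (c # u) @ x # v) = wprod ((p @ [c]) @ u @ x # v)" by simp
  also have "\<dots> = wprod ((p @ [c]) @ x # u @ v)" by (rule Cons.IH) (use Cons.prems in simp)
  also have "\<dots> = wprod (p @ c # x # (u @ v))" by simp
  also have "\<dots> = wprod (p @ x # c # (u @ v))" by (rule adj[OF K]) (use Cons.prems in simp)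
  finally show ?case by simp
qed

lemma perm_inv:
  assumes K:  "KK n TYPE('a::semigroup_mult)"
  shows "length p + length xs = n + 1 \<Longrightarrow> mset xs = mset ys \<Longrightarrow>
    wprod (p @ (xs::'a list)) = wprod (p @ ys)"
proof (induction xs arbitrary: p ys)
  case Nil then show ?case by simp
next
  case (Cons x xs)
  have "x \<in> set ys" using Cons.prems(2) by (metis list.set_intros(1) set_mset_mset)
  then obtain u v where ys: "ys = u @ x # v" by (metis split_list)
  have ms: "mset xs = mset (u @ v)" using Cons.prems(2) ys by simp
  have lys: "length ys = length (x # xs)" using Cons.prems(2) by (metis size_mset)
  have "wprod (p @ ys) = wprod (p @ x # u @ v)"
    unfolding ys by (rule move_front[OF K]) (use lys ys Cons.prems(1) in simp)
  also have "\<dots> = wprod ((p @ [x]) @ (u @ v))" by simp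
  also have "\<dots> = wprod ((p @ [x]) @ xs)"
    by (rule Cons.IH[symmetric]) (use Cons.prems ms in simp_all)
  finally show ?case by simp
qed

end

theorem theorem3p5:
  fixes s :: "'k::field \<Rightarrow> 'a::ring \<Rightarrow> 'a" and n :: nat
  assumes "assoc_algebra s"
    and "n \<ge> 2"
    and "satisfies_identity TYPE('a) n (transpose 0 (n - 1))"
  shows "eventually_commutative TYPE('a) (n + 1)"
proof -
  have K: "KK n TYPE('a)"
    unfolding KK_def by (intro allI impI, rule K_of_ident[OF assms(3) assms(2)])
  show ?thesis
    unfolding eventually_commutative_def satisfies_identity_def
  proof (intro allI impI)
    fix \<tau> :: "nat \<Rightarrow> nat" and a :: "nat \<Rightarrow> 'a"
    assume p: "\<tau> permutes {..<n+1}"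
    have "image_mset \<tau> (mset [0..<n+1]) = mset [0..<n+1]"
    proof -
      have e: "mset [0..<n+1] = mset_set {..<n+1}" by (simp only: mset_upt lessThan_atLeast0)
      have "image_mset \<tau> (mset_set {..<n+1}) = mset_set (\<tau> ` {..<n+1})"
        by (rule image_mset_mset_set) (rule permutes_inj_on[OF p])
      also have "\<tau> ` {..<n+1} = {..<n+1}" by (rule permutes_image[OF p])
      finally show ?thesis unfolding e .
    qed
    then have ms: "mset (map a [0..<n+1]) = mset (map (a \<circ> \<tau>) [0..<n+1])"
      by (simp only: mset_map image_mset.compositionality[symmetric])
    have ln: "length ([]::'a list) + length (map a [0..<n+1]) = n + 1" by simp
    have "wprod ([] @ map a [0..<n+1]) = wprod ([] @ map (a \<circ> \<tau>) [0..<n+1])"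
      by (rule perm_inv[OF assms(2) K ln ms])
    then show "wprod (map a [0..<n+1]) = wprod (map (a \<circ> \<tau>) [0..<n+1])"
      by (simp only: append_Nil)
  qed
qed

end
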